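(* Let $Q$ be a symmetric Leibniz algebra and $L$ a dense subalgebra of $Q$, and suppose $Q$ is a multiplicatively semiprime algebra of quotients of $L$. Then for every essential ideal $I$ of $L$, the extension $I\subseteq Q$ is dense.
   Context: A symmetric Leibniz algebra satisfies both $[x,[y,z]]=[[x,y],z]-[[x,z],y]$ and $[x,[y,z]]=[[x,y],z]+[y,[x,z]]$. For $x\in Q$, $R_x(u)=[u,x]$, $L_x(u)=[x,u]$. $M(Q)$ is the associative subalgebra of $\mathrm{End}(Q)$ generated by the identity and all $R_x,L_x$ ($x\in Q$). For a subalgebra $K$ of $Q$, $K^{ann}=\{\mu\in M(Q):\mu(x)=0\ \forall x\in K\}$, and $K$ is dense in $Q$ (the extension $K\subseteq Q$ is dense) if $K^{ann}=\{0\}$. A Leibniz algebra is semiprime if $[I,I]\ne\{0\}$ for every nonzero ideal $I$ (ideals: subspaces $I$ with $[I,L]\subseteq I$, $[L,I]\subseteq I$); an associative algebra is semiprime if it has no nonzero two-sided ideal with zero square. $Q$ is multiplicatively semiprime if $Q$ and $M(Q)$ are both semiprime. An ideal $I$ of $L$ is essential if $I\cap J\ne\{0\}$ for each nonzero ideal $J$ of $L$. With $\mathscr{A}_Q(L)$ the associative algebra generated by $R_x,L_y$ ($x,y\in L$) acting on $Q$, ${}_L(q)=\mathbb{F}q+\{\sum\xi_i(q):\xi_i\in\mathscr{A}_Q(L)\}$ and $(L:q)=\{x\in L:[x,{}_L(q)]\subseteq L,[{}_L(q),x]\subseteq L\}$; $Q$ is an algebra of quotients of $L$ if for all $p,q\in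 Q$, $p\ne0$, there is $x\in(L:q)$ with $[x,p]\ne0$ or $y\in(L:q)$ with $[p,y]\ne0$. *)

theory Defs
  imports Complex_Main
begin

text \<open>A Leibniz algebra over a field 'k is modelled as the whole type 'v, which is a
vector space via scale, together with a bilinear bracket br.  Subalgebras,
ideals etc. are subsets of 'v.\<close>

definition bilinear_bracket :: "('k::field \<Rightarrow> 'v::ab_group_add \<Rightarrow> 'v) \<Rightarrow> ('v \<Rightarrow> 'v \<Rightarrow> 'v) \<Rightarrow> bool" where
  "bilinear_bracket scale br \<longleftrightarrow>
     (\<forall>x. Vector_Spaces.linear scale scale (br x)) \<and>
     (\<forall>y. Vector_Spaces.linear scale scale (\<lambda>x. br x y))"

definition symmetric_leibniz :: "('k::field \<Rightarrow> 'v::ab_group_add \<Rightarrow> 'v) \<Rightarrow> ('v \<Rightarrow> 'v \<Rightarrow> 'v) \<Rightarrow> bool" where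
  "symmetric_leibniz scale br \<longleftrightarrow>
     vector_space scale \<and> bilinear_bracket scale br \<and>
     (\<forall>x y z. br x (br y z) = br (br x y) z - br (br x z) y) \<and>
     (\<forall>x y z. br x (br y z) = br (br x y) z + br y (br x z))"

definition subalgebra :: "('k::field \<Rightarrow> 'v::ab_group_add \<Rightarrow> 'v) \<Rightarrow> ('v \<Rightarrow> 'v \<Rightarrow> 'v) \<Rightarrow> 'v set \<Rightarrow> bool" where
  "subalgebra scale br L \<longleftrightarrow> module.subspace scale L \<and> (\<forall>x\<in>L. \<forall>y\<in>L. br x y \<in> L)"

definition leib_ideal :: "('k::field \<Rightarrow> 'v::ab_group_add \<Rightarrow> 'v) \<Rightarrow> ('v \<Rightarrow> 'v \<Rightarrow> 'v) \<Rightarrow> 'v set \<Rightarrow> 'v set \<Rightarrow> bool" where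
  "leib_ideal scale br L I \<longleftrightarrow> module.subspace scale I \<and> I \<subseteq> L \<and>
     (\<forall>x\<in>I. \<forall>y\<in>L. br x y \<in> I \<and> br y x \<in> I)"

definition leib_semiprime :: "('k::field \<Rightarrow> 'v::ab_group_add \<Rightarrow> 'v) \<Rightarrow> ('v \<Rightarrow> 'v \<Rightarrow> 'v) \<Rightarrow> 'v set \<Rightarrow> bool" where
  "leib_semiprime scale br L \<longleftrightarrow>
     (\<forall>I. leib_ideal scale br L I \<and> I \<noteq> {0} \<longrightarrow> (\<exists>x\<in>I. \<exists>y\<in>I. br x y \<noteq> 0))"

definition essential_ideal :: "('k::field \<Rightarrow> 'v::ab_group_add \<Rightarrow> 'v) \<Rightarrow> ('v \<Rightarrow> 'v \<Rightarrow> 'v) \<Rightarrow> 'v set \<Rightarrow> 'v set \<Rightarrow> bool" where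
  "essential_ideal scale br L I \<longleftrightarrow> leib_ideal scale br L I \<and>
     (\<forall>J. leib_ideal scale br L J \<and> J \<noteq> {0} \<longrightarrow> I \<inter> J \<noteq> {0})"

inductive_set mult_alg :: "('k::field \<Rightarrow> 'v::ab_group_add \<Rightarrow> 'v) \<Rightarrow> ('v \<Rightarrow> 'v \<Rightarrow> 'v) \<Rightarrow> ('v \<Rightarrow> 'v) set"
  for scale br where
  ma_id: "id \<in> mult_alg scale br"
| ma_R: "(\<lambda>u. br u x) \<in> mult_alg scale br"
| ma_L: "(\<lambda>u. br x u) \<in> mult_alg scale br"
| ma_zero: "(\<lambda>u. 0) \<in> mult_alg scale br"
| ma_add: "f \<in> mult_alg scale br \<Longrightarrow> g \<in> mult_alg scale br \<Longrightarrow> (\<lambda>u. f u + g u) \<in> mult_alg scale br"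
| ma_scale: "f \<in> mult_alg scale br \<Longrightarrow> (\<lambda>u. scale c (f u)) \<in> mult_alg scale br"
| ma_comp: "f \<in> mult_alg scale br \<Longrightarrow> g \<in> mult_alg scale br \<Longrightarrow> f \<circ> g \<in> mult_alg scale br"

inductive_set assoc_alg :: "('k::field \<Rightarrow> 'v::ab_group_add \<Rightarrow> 'v) \<Rightarrow> ('v \<Rightarrow> 'v \<Rightarrow> 'v) \<Rightarrow> 'v set \<Rightarrow> ('v \<Rightarrow> 'v) set"
  for scale br L where
  aa_R: "x \<in> L \<Longrightarrow> (\<lambda>u. br u x) \<in> assoc_alg scale br L"
| aa_L: "x \<in> L \<Longrightarrow> (\<lambda>u. br x u) \<in> assoc_alg scale br L"
| aa_zero: "(\<lambda>u. 0) \<in> assoc_alg scale br L"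
| aa_add: "f \<in> assoc_alg scale br L \<Longrightarrow> g \<in> assoc_alg scale br L \<Longrightarrow> (\<lambda>u. f u + g u) \<in> assoc_alg scale br L"
| aa_scale: "f \<in> assoc_alg scale br L \<Longrightarrow> (\<lambda>u. scale c (f u)) \<in> assoc_alg scale br L"
| aa_comp: "f \<in> assoc_alg scale br L \<Longrightarrow> g \<in> assoc_alg scale br L \<Longrightarrow> f \<circ> g \<in> assoc_alg scale br L"

definition assoc_ideal :: "('k::field \<Rightarrow> 'v::ab_group_add \<Rightarrow> 'v) \<Rightarrow> ('v \<Rightarrow> 'v) set \<Rightarrow> ('v \<Rightarrow> 'v) set \<Rightarrow> bool" where
  "assoc_ideal scale A J \<longleftrightarrow> J \<subseteq> A \<and> (\<lambda>u. 0) \<in> J \<and>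
     (\<forall>f\<in>J. \<forall>g\<in>J. (\<lambda>u. f u + g u) \<in> J) \<and>
     (\<forall>f\<in>J. \<forall>c. (\<lambda>u. scale c (f u)) \<in> J) \<and>
     (\<forall>f\<in>J. \<forall>m\<in>A. m \<circ> f \<in> J \<and> f \<circ> m \<in> J)"

definition assoc_semiprime :: "('k::field \<Rightarrow> 'v::ab_group_add \<Rightarrow> 'v) \<Rightarrow> ('v \<Rightarrow> 'v) set \<Rightarrow> bool" where
  "assoc_semiprime scale A \<longleftrightarrow>
     (\<forall>J. assoc_ideal scale A J \<and> (\<forall>f\<in>J. \<forall>g\<in>J. f \<circ> g = (\<lambda>u. 0)) \<longrightarrow> J = {\<lambda>u. 0})"

definition mult_semiprime :: "('k::field \<Rightarrow> 'v::ab_group_add \<Rightarrow> 'v) \<Rightarrow> ('v \<Rightarrow> 'v \<Rightarrow> 'v) \<Rightarrow> bool" where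
  "mult_semiprime scale br \<longleftrightarrow> leib_semiprime scale br UNIV \<and> assoc_semiprime scale (mult_alg scale br)"

definition annih :: "('k::field \<Rightarrow> 'v::ab_group_add \<Rightarrow> 'v) \<Rightarrow> ('v \<Rightarrow> 'v \<Rightarrow> 'v) \<Rightarrow> 'v set \<Rightarrow> ('v \<Rightarrow> 'v) set" where
  "annih scale br K = {\<mu> \<in> mult_alg scale br. \<forall>x\<in>K. \<mu> x = 0}"

definition dense_in :: "('k::field \<Rightarrow> 'v::ab_group_add \<Rightarrow> 'v) \<Rightarrow> ('v \<Rightarrow> 'v \<Rightarrow> 'v) \<Rightarrow> 'v set \<Rightarrow> bool" where
  "dense_in scale br K \<longleftrightarrow> annih scale br K = {\<lambda>u. 0}"

definition gen_by :: "('k::field \<Rightarrow> 'v::ab_group_add \<Rightarrow> 'v) \<Rightarrow> ('v \<Rightarrow> 'v \<Rightarrow> 'v) \<Rightarrow> 'v set \<Rightarrow> 'v \<Rightarrow> 'v set" where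
  "gen_by scale br L q = {scale a q + \<xi> q | a \<xi>. \<xi> \<in> assoc_alg scale br L}"

definition colon :: "('k::field \<Rightarrow> 'v::ab_group_add \<Rightarrow> 'v) \<Rightarrow> ('v \<Rightarrow> 'v \<Rightarrow> 'v) \<Rightarrow> 'v set \<Rightarrow> 'v \<Rightarrow> 'v set" where
  "colon scale br L q = {x \<in> L. \<forall>u\<in>gen_by scale br L q. br x u \<in> L \<and> br u x \<in> L}"

definition algebra_of_quotients :: "('k::field \<Rightarrow> 'v::ab_group_add \<Rightarrow> 'v) \<Rightarrow> ('v \<Rightarrow> 'v \<Rightarrow> 'v) \<Rightarrow> 'v set \<Rightarrow> bool" where
  "algebra_of_quotients scale br L \<longleftrightarrow>
     (\<forall>p q. p \<noteq> 0 \<longrightarrow> (\<exists>x\<in>colon scale br L q. br x p \<noteq> 0 \<or> br p x \<noteq> 0))"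

end

theory Submission
  imports Defs
begin

lemma mult_alg_lin:
  assumes vs: "vector_space scale" and bl: "bilinear_bracket scale br"
    and f: "f \<in> mult_alg scale br"
  shows "(\<forall>a b. f (a + b) = f a + f b) \<and> (\<forall>c a. f (scale c a) = scale c (f a))"
  using f
proof (induction rule: mult_alg.induct)
  case ma_id then show ?case by simp
next
  case (ma_R x) then show ?case using bl unfolding bilinear_bracket_def Vector_Spaces.linear_iff by auto
next
  case (ma_L x) then show ?case using bl unfolding bilinear_bracket_def Vector_Spaces.linear_iff by auto
next
  case ma_zero then show ?case using module.scale_zero_right[OF module_iff_vector_space[THEN iffD2, OF vs]] by simp
next
  case (ma_add f g) then show ?case
    using module.scale_right_distrib[OF module_iff_vector_space[THEN iffD2, OF vs]] by (simp add: algebra_simps)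
next
  case (ma_scale f c) then show ?case
    using module.scale_right_distrib[OF module_iff_vector_space[THEN iffD2, OF vs]] module.scale_scale[OF module_iff_vector_space[THEN iffD2, OF vs]]
    by (simp add: mult.commute)
next
  case (ma_comp f g) then show ?case by simp
qed

lemma mult_alg_zero:
  assumes vs: "vector_space scale" and bl: "bilinear_bracket scale br"
    and f: "f \<in> mult_alg scale br"
  shows "f 0 = 0"
proof -
  have "f (0 + 0) = f 0 + f 0" using mult_alg_lin[OF vs bl f] by blast
  then show ?thesis by simp
qed

theorem proposition6p5:
  fixes scale :: "'k::field \<Rightarrow> 'v::ab_group_add \<Rightarrow> 'v"
    and br :: "'v \<Rightarrow> 'v \<Rightarrow> 'v"
    and L I :: "'v set"
  assumes "symmetric_leibniz scale br"
    and "subalgebra scale br L"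
    and "dense_in scale br L"
    and "mult_semiprime scale br"
    and "algebra_of_quotients scale br L"
    and "essential_ideal scale br L I"
  shows "dense_in scale br I"
proof -
  let ?M = "mult_alg scale br"
  let ?N = "annih scale br I"
  have vs: "vector_space scale" and bl: "bilinear_bracket scale br"
    and id1: "\<And>x y z. br x (br y z) = br (br x y) z - br (br x z) y"
    and id2: "\<And>x y z. br x (br y z) = br (br x y) z + br y (br x z)"
    using assms(1) unfolding symmetric_leibniz_def by blast+
  have brL: "\<And>x a b. br x (a + b) = br x a + br x b" "\<And>x c a. br x (scale c a) = scale c (br x a)"
    and brR: "\<And>y a b. br (a + b) y = br a y + br b y" "\<And>y c a. br (scale c a) y = scale c (br a y)"
    using bl unfolding bilinear_bracket_def Vector_Spaces.linear_iff by auto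
  have br0: "\<And>x. br x 0 = 0" "\<And>x. br 0 x = 0"
    by (metis add.right_neutral add_left_cancel brL(1)) (metis add.right_neutral add_left_cancel brR(1))
  have md: "module scale" using vs module_iff_vector_space by blast
  have sc0: "\<And>c. scale c 0 = 0" using module.scale_zero_right[OF module_iff_vector_space[THEN iffD2, OF vs]] by simp
  have sc1: "\<And>x. scale 1 x = x" using module.scale_one[OF module_iff_vector_space[THEN iffD2, OF vs]] by simp
  have lin: "\<And>f a b. f \<in> ?M \<Longrightarrow> f (a + b) = f a + f b"
    and hom: "\<And>f c a. f \<in> ?M \<Longrightarrow> f (scale c a) = scale c (f a)"
    using mult_alg_lin[OF vs bl] by blast+
  have MI: "id \<in> ?M" "\<And>x. (\<lambda>u. br u x) \<in> ?M" "\<And>x. (\<lambda>u. br x u) \<in> ?M"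
    "(\<lambda>u. 0) \<in> ?M"
    "\<And>f g. f \<in> ?M \<Longrightarrow> g \<in> ?M \<Longrightarrow> (\<lambda>u. f u + g u) \<in> ?M"
    "\<And>f c. f \<in> ?M \<Longrightarrow> (\<lambda>u. scale c (f u)) \<in> ?M"
    "\<And>f g. f \<in> ?M \<Longrightarrow> g \<in> ?M \<Longrightarrow> f \<circ> g \<in> ?M"
    by (fact mult_alg.ma_id, fact mult_alg.ma_R, fact mult_alg.ma_L, fact mult_alg.ma_zero,
      erule (1) mult_alg.ma_add, erule mult_alg.ma_scale, erule (1) mult_alg.ma_comp)
  have z: "\<And>f. f \<in> ?M \<Longrightarrow> f 0 = 0" using mult_alg_zero[OF vs bl] by blast
  have Iid: "leib_ideal scale br L I" and ess: "\<And>J. leib_ideal scale br L J \<Longrightarrow> J \<noteq> {0} \<Longrightarrow> I \<inter> J \<noteq> {0}"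
    using assms(6) unfolding essential_ideal_def by auto
  have IL: "I \<subseteq> L" and Icl: "\<And>x y. x \<in> I \<Longrightarrow> y \<in> L \<Longrightarrow> br x y \<in> I \<and> br y x \<in> I"
    using Iid unfolding leib_ideal_def by auto
  have Ldense: "annih scale br L = {\<lambda>u. 0}" using assms(3) unfolding dense_in_def .
  have Nmem: "\<And>\<nu>. \<nu> \<in> ?N \<longleftrightarrow> \<nu> \<in> ?M \<and> (\<forall>x\<in>I. \<nu> x = 0)" unfolding annih_def by auto
  have dL: "\<nu> \<circ> (\<lambda>u. br i u) = (\<lambda>u. 0)" and dR: "\<nu> \<circ> (\<lambda>u. br u i) = (\<lambda>u. 0)"
    if "\<nu> \<in> ?N" "i \<in> I" for \<nu> i
  proof -
    have "\<nu> \<circ> (\<lambda>u. br i u) \<in> annih scale br L"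
      using that Icl unfolding annih_def by (auto simp: MI)
    then show "\<nu> \<circ> (\<lambda>u. br i u) = (\<lambda>u. 0)" using Ldense by auto
    have "\<nu> \<circ> (\<lambda>u. br u i) \<in> annih scale br L"
      using that Icl unfolding annih_def by (auto simp: MI)
    then show "\<nu> \<circ> (\<lambda>u. br u i) = (\<lambda>u. 0)" using Ldense by auto
  qed
  have rc: "\<forall>\<nu>\<in>?N. \<nu> \<circ> m \<in> ?N" if "m \<in> ?M" for m
    using that
  proof (induction rule: mult_alg.induct)
    case ma_id then show ?case by simp
  next
    case (ma_R x)
    show ?case
    proof
      fix \<nu> assume n: "\<nu> \<in> ?N"
      have "\<nu> (br i x) = 0" if "i \<in> I" for i using dL[OF n that] by (metis comp_apply)
      then show "\<nu> \<circ> (\<lambda>u. br u x) \<in> ?N" using n Nmem by (auto simp: MI)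
    qed
  next
    case (ma_L x)
    show ?case
    proof
      fix \<nu> assume n: "\<nu> \<in> ?N"
      have "\<nu> (br x i) = 0" if "i \<in> I" for i using dR[OF n that] by (metis comp_apply)
      then show "\<nu> \<circ> (\<lambda>u. br x u) \<in> ?N" using n Nmem by (auto simp: MI)
    qed
  next
    case ma_zero
    show ?case
    proof
      fix \<nu> assume n: "\<nu> \<in> ?N"
      then have e: "\<nu> \<circ> (\<lambda>u. 0) = (\<lambda>u. 0)" using z Nmem by (auto simp: fun_eq_iff)
      have "(\<lambda>u. 0) \<in> ?N" using MI(4) Nmem by simp
      then show "\<nu> \<circ> (\<lambda>u. 0) \<in> ?N" by (simp only: e)
    qed
  next
    case (ma_add f g)
    show ?case
    proof
      fix \<nu> assume n: "\<nu> \<in> ?N"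
      then have a: "\<nu> \<circ> f \<in> ?N" "\<nu> \<circ> g \<in> ?N" using ma_add.IH n by blast+
      have e: "\<nu> \<circ> (\<lambda>u. f u + g u) = (\<lambda>u. (\<nu> \<circ> f) u + (\<nu> \<circ> g) u)"
        using lin n Nmem by auto
      have m: "(\<lambda>u. (\<nu> \<circ> f) u + (\<nu> \<circ> g) u) \<in> ?M" using a Nmem MI(5) by blast
      have k: "\<forall>x\<in>I. (\<nu> \<circ> f) x + (\<nu> \<circ> g) x = 0" using a Nmem by simp
      have "(\<lambda>u. (\<nu> \<circ> f) u + (\<nu> \<circ> g) u) \<in> ?N" using Nmem m k by blast
      then show "\<nu> \<circ> (\<lambda>u. f u + g u) \<in> ?N" by (simp only: e)
    qed
  next
    case (ma_scale f c)
    show ?case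
    proof
      fix \<nu> assume n: "\<nu> \<in> ?N"
      then have a: "\<nu> \<circ> f \<in> ?N" using ma_scale.IH n by blast
      have e: "\<nu> \<circ> (\<lambda>u. scale c (f u)) = (\<lambda>u. scale c ((\<nu> \<circ> f) u))"
        using hom n Nmem by auto
      have m: "(\<lambda>u. scale c ((\<nu> \<circ> f) u)) \<in> ?M" using a Nmem MI(6) by blast
      have k: "\<forall>x\<in>I. scale c ((\<nu> \<circ> f) x) = 0" using a Nmem sc0 by simp
      have "(\<lambda>u. scale c ((\<nu> \<circ> f) u)) \<in> ?N" using Nmem m k by blast
      then show "\<nu> \<circ> (\<lambda>u. scale c (f u)) \<in> ?N" by (simp only: e)
    qed
  next
    case (ma_comp f g)
    then show ?case by (metis comp_assoc)
  qed
  define J where "J = ?N \<inter> {h \<in> ?M. \<forall>\<nu>\<in>?N. \<nu> \<circ> h = (\<lambda>u. 0)}"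
  have Jmem: "h \<in> J \<longleftrightarrow> h \<in> ?M \<and> (\<forall>x\<in>I. h x = 0) \<and> (\<forall>\<nu>\<in>?N. \<forall>u. \<nu> (h u) = 0)" for h
    unfolding J_def using Nmem by (auto simp: fun_eq_iff)
  have "assoc_ideal scale ?M J"
    unfolding assoc_ideal_def
  proof (intro conjI ballI allI)
    show "J \<subseteq> ?M" using Jmem by blast
    show "(\<lambda>u. 0) \<in> J" unfolding Jmem using Nmem z MI(4) by simp
  next
    fix f g assume f: "f \<in> J" and g: "g \<in> J"
    have "\<nu> (f u + g u) = 0" if "\<nu> \<in> ?N" for \<nu> u
    proof -
      have "\<nu> (f u) = 0" "\<nu> (g u) = 0" using f g that Jmem by blast+
      moreover have nM: "\<nu> \<in> ?M" using that Nmem by blast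
      ultimately show ?thesis using lin[OF nM] by simp
    qed
    then show "(\<lambda>u. f u + g u) \<in> J" unfolding Jmem using f g Jmem MI(5) by simp
  next
    fix f c assume f: "f \<in> J"
    have "\<nu> (scale c (f u)) = 0" if "\<nu> \<in> ?N" for \<nu> u
    proof -
      have "\<nu> (f u) = 0" using f that Jmem by blast
      moreover have nM: "\<nu> \<in> ?M" using that Nmem by blast
      ultimately show ?thesis using hom[OF nM] sc0 by simp
    qed
    then show "(\<lambda>u. scale c (f u)) \<in> J" unfolding Jmem using f Jmem MI(6) sc0 by simp
  next
    fix f m assume f: "f \<in> J" and m: "m \<in> ?M"
    have fM: "f \<in> ?M" and fI: "\<forall>x\<in>I. f x = 0" and fR: "\<forall>\<nu>\<in>?N. \<forall>u. \<nu> (f u) = 0"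
      using f Jmem by blast+
    have "\<nu> (m (f u)) = 0" if "\<nu> \<in> ?N" for \<nu> u
    proof -
      have "\<nu> \<circ> m \<in> ?N" using rc[OF m] that by blast
      then show ?thesis using fR by (metis comp_apply)
    qed
    moreover have "m \<circ> f \<in> ?M" using MI(7) m fM by blast
    ultimately show "m \<circ> f \<in> J" unfolding Jmem using fI z m by simp
    have "f \<circ> m \<in> ?N" using rc[OF m] f J_def by blast
    moreover have "f \<circ> m \<in> ?M" using MI(7) m fM by blast
    ultimately show "f \<circ> m \<in> J" unfolding Jmem using fR Nmem by simp
  qed
  moreover have "\<forall>f\<in>J. \<forall>g\<in>J. f \<circ> g = (\<lambda>u. 0)"
    unfolding J_def by auto
  ultimately have J0: "J = {\<lambda>u. 0}"
    using assms(4) unfolding mult_semiprime_def assoc_semiprime_def by blast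
  have inJ: "h = (\<lambda>u. 0)" if "h \<in> ?M" "\<forall>x\<in>I. h x = 0" "\<forall>\<nu>\<in>?N. \<nu> \<circ> h = (\<lambda>u. 0)" for h
    using that J0 Nmem unfolding J_def by blast
  define C where "C = {p. \<forall>i\<in>I. br i p = 0 \<and> br p i = 0}"
  have imC: "\<mu> q \<in> C" if "\<mu> \<in> ?N" for \<mu> q
  proof -
    have "br i (\<mu> q) = 0 \<and> br (\<mu> q) i = 0" if i: "i \<in> I" for i
    proof -
      have muM: "\<mu> \<in> ?M" and muI: "\<forall>x\<in>I. \<mu> x = 0" using \<open>\<mu> \<in> ?N\<close> Nmem by blast+
      have "(\<lambda>u. br i u) \<circ> \<mu> = (\<lambda>u. 0)"
      proof (rule inJ)
        show "(\<lambda>u. br i u) \<circ> \<mu> \<in> ?M" using MI(7)[OF MI(3) muM] .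
        show "\<forall>x\<in>I. ((\<lambda>u. br i u) \<circ> \<mu>) x = 0" using muI br0 by simp
        show "\<forall>\<nu>\<in>?N. \<nu> \<circ> ((\<lambda>u. br i u) \<circ> \<mu>) = (\<lambda>u. 0)"
        proof
          fix \<nu> assume "\<nu> \<in> ?N"
          then have "\<nu> \<circ> (\<lambda>u. br i u) = (\<lambda>u. 0)" using dL i by blast
          then show "\<nu> \<circ> ((\<lambda>u. br i u) \<circ> \<mu>) = (\<lambda>u. 0)" by (simp add: comp_assoc[symmetric] fun_eq_iff)
        qed
      qed
      moreover have "(\<lambda>u. br u i) \<circ> \<mu> = (\<lambda>u. 0)"
      proof (rule inJ)
        show "(\<lambda>u. br u i) \<circ> \<mu> \<in> ?M" using MI(7)[OF MI(2) muM] .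
        show "\<forall>x\<in>I. ((\<lambda>u. br u i) \<circ> \<mu>) x = 0" using muI br0 by simp
        show "\<forall>\<nu>\<in>?N. \<nu> \<circ> ((\<lambda>u. br u i) \<circ> \<mu>) = (\<lambda>u. 0)"
        proof
          fix \<nu> assume "\<nu> \<in> ?N"
          then have "\<nu> \<circ> (\<lambda>u. br u i) = (\<lambda>u. 0)" using dR i by blast
          then show "\<nu> \<circ> ((\<lambda>u. br u i) \<circ> \<mu>) = (\<lambda>u. 0)" by (simp add: comp_assoc[symmetric] fun_eq_iff)
        qed
      qed
      ultimately show ?thesis by (metis comp_apply)
    qed
    then show ?thesis unfolding C_def by auto
  qed
  have Ccl: "br x p \<in> C \<and> br p x \<in> C" if "p \<in> C" "x \<in> L" for p x
  proof -
    have "br i (br x p) = 0 \<and> br (br x p) i = 0 \<and> br i (br p x) = 0 \<and> br (br p x) i = 0"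
      if i: "i \<in> I" for i
    proof -
      have j: "br i x \<in> I" "br x i \<in> I" using Icl[OF i \<open>x \<in> L\<close>] by auto
      have pi: "br i p = 0" "br p i = 0" "br (br i x) p = 0" "br p (br i x) = 0"
        "br (br x i) p = 0" "br p (br x i) = 0"
        using \<open>p \<in> C\<close> i j unfolding C_def by auto
      have a: "br i (br x p) = 0" using id2[of i x p] pi br0 by simp
      have b: "br (br x p) i = 0" using id1[of x p i] pi br0 by (simp add: algebra_simps)
      have c: "br i (br p x) = 0" using id2[of i p x] pi br0 by simp
      have d: "br (br p x) i = 0" using id1[of p x i] pi br0 by (simp add: algebra_simps)
      show ?thesis using a b c d by simp
    qed
    then show ?thesis unfolding C_def by auto
  qed
  have C0: "C = {0}"
  proof (rule ccontr)
    have "0 \<in> C" unfolding C_def using br0 by auto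
    moreover assume "C \<noteq> {0}"
    ultimately obtain p where p: "p \<in> C" "p \<noteq> 0" by blast
    obtain x where x: "x \<in> colon scale br L p" "br x p \<noteq> 0 \<or> br p x \<noteq> 0"
      using assms(5) p unfolding algebra_of_quotients_def by blast
    have "p \<in> gen_by scale br L p" unfolding gen_by_def
      using sc1 by (auto intro!: exI[of _ 1] exI[of _ "\<lambda>u. 0"] assoc_alg.intros)
    then have xL: "x \<in> L" and bxp: "br x p \<in> L" "br p x \<in> L"
      using x(1) unfolding colon_def by auto
    define K where "K = L \<inter> C"
    have sub: "module.subspace scale K"
      unfolding module.subspace_def[OF md] K_def
    proof (intro conjI ballI allI)
      show "0 \<in> L \<inter> C" using assms(2) br0 unfolding subalgebra_def module.subspace_def[OF md] C_def by auto
    next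
      fix a b assume "a \<in> L \<inter> C" "b \<in> L \<inter> C"
      then show "a + b \<in> L \<inter> C" using assms(2) brL brR unfolding subalgebra_def module.subspace_def[OF md] C_def by auto
    next
      fix c a assume "a \<in> L \<inter> C"
      then show "scale c a \<in> L \<inter> C" using assms(2) brL brR sc0 unfolding subalgebra_def module.subspace_def[OF md] C_def by auto
    qed
    have Kid: "leib_ideal scale br L K"
      unfolding leib_ideal_def using sub Ccl assms(2) unfolding K_def subalgebra_def by auto
    have "K \<noteq> {0}"
    proof
      assume "K = {0}"
      then show False using x(2) xL bxp Ccl[OF p(1) xL] unfolding K_def by blast
    qed
    then have "I \<inter> K \<noteq> {0}" using ess Kid by blast
    moreover have "0 \<in> I \<inter> K" using Iid sub unfolding leib_ideal_def module.subspace_def[OF md] by auto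
    ultimately obtain a where a: "a \<in> I" "a \<in> C" "a \<noteq> 0" unfolding K_def by blast
    have "(\<lambda>u. br a u) = (\<lambda>u. 0)"
      apply (rule inJ)
      using a dL unfolding C_def by (auto simp: MI)
    moreover have "(\<lambda>u. br u a) = (\<lambda>u. 0)"
      apply (rule inJ)
      using a dR unfolding C_def by (auto simp: MI)
    moreover obtain y where "br y a \<noteq> 0 \<or> br a y \<noteq> 0"
      using assms(5) a unfolding algebra_of_quotients_def by blast
    ultimately show False by (metis)
  qed
  have "?N = {\<lambda>u. 0}"
  proof
    show "?N \<subseteq> {\<lambda>u. 0}" using imC C0 by (auto simp: fun_eq_iff)
    show "{\<lambda>u. 0} \<subseteq> ?N" using Nmem by (auto simp: MI)
  qed
  then show ?thesis unfolding dense_in_def .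
qed

end
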